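(* Let $R$ be a ring and $n\in\{0,1,2,\dots\}\cup\{\infty\}$. Let $f:X^\bullet\to Y^\bullet$ be an $n$-quasi-isomorphism where $X^\bullet$ and $Y^\bullet$ are bounded above complexes of $n$-projective left $R$-modules. Then $f$ is a homotopy equivalence.
   Context: $R$ is an associative ring with identity; modules are left $R$-modules; $\infty+1=\infty$. For a positive integer $k$, $\mathcal{P}^{<k}$ is the class of modules $M$ admitting an exact sequence $0\to P_j\to\cdots\to P_0\to M\to 0$ with $j\le k-1$ and every $P_i$ finitely generated projective; $\mathcal{P}^{<\infty}$ is the class of modules admitting such a sequence for some finite $j$. A short exact sequence is $n$-exact if it stays exact under $\mathrm{Hom}_R(M,-)$ for all $M\in\mathcal{P}^{<n+1}$; a module $P$ is $n$-projective if $\mathrm{Hom}_R(P,-)$ preserves exactness of every $n$-exact sequence. A complex $Z^\bullet$ is $n$-exact if $\mathrm{Hom}_R(P,Z^\bullet)$ is exact for every $P\in\mathcal{P}^{<n+1}$; a cochain map is an $n$-quasi-isomorphism if its mapping cone is $n$-exact. *)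

theory Defs
  imports "HOL-Algebra.Module" "HOL-Library.Extended_Nat"
begin

definition lmodule :: "'r ring \<Rightarrow> ('r, 'a) module \<Rightarrow> bool" where
  "lmodule R M \<longleftrightarrow> ring R \<and> abelian_group M \<and> module_axioms R M"

definition lhom :: "'r ring \<Rightarrow> ('r, 'a) module \<Rightarrow> ('r, 'b) module \<Rightarrow> ('a \<Rightarrow> 'b) \<Rightarrow> bool" where
  "lhom R M N f \<longleftrightarrow> f \<in> carrier M \<rightarrow> carrier N
     \<and> (\<forall>x\<in>carrier M. \<forall>y\<in>carrier M. f (x \<oplus>\<^bsub>M\<^esub> y) = f x \<oplus>\<^bsub>N\<^esub> f y)
     \<and> (\<forall>r\<in>carrier R. \<forall>x\<in>carrier M. f (r \<odot>\<^bsub>M\<^esub> x) = r \<odot>\<^bsub>N\<^esub> f x)"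

definition short_exact :: "'r ring \<Rightarrow> ('r, 'a) module \<Rightarrow> ('r, 'b) module \<Rightarrow> ('r, 'c) module
    \<Rightarrow> ('a \<Rightarrow> 'b) \<Rightarrow> ('b \<Rightarrow> 'c) \<Rightarrow> bool" where
  "short_exact R A B C \<alpha> \<beta> \<longleftrightarrow> lmodule R A \<and> lmodule R B \<and> lmodule R C
     \<and> lhom R A B \<alpha> \<and> lhom R B C \<beta> \<and> inj_on \<alpha> (carrier A)
     \<and> \<beta> ` carrier B = carrier C
     \<and> {b \<in> carrier B. \<beta> b = \<zero>\<^bsub>C\<^esub>} = \<alpha> ` carrier A"

text \<open>Exactness of 0 -> Hom(M,A) -> Hom(M,B) -> Hom(M,C) -> 0 (homomorphisms compared on the carrier).\<close>

definition hom_exact :: "'r ring \<Rightarrow> ('r, 'm) module \<Rightarrow> ('r, 'a) module \<Rightarrow> ('r, 'b) module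
    \<Rightarrow> ('r, 'c) module \<Rightarrow> ('a \<Rightarrow> 'b) \<Rightarrow> ('b \<Rightarrow> 'c) \<Rightarrow> bool" where
  "hom_exact R M A B C \<alpha> \<beta> \<longleftrightarrow>
     (\<forall>g. lhom R M A g \<and> (\<forall>x\<in>carrier M. \<alpha> (g x) = \<zero>\<^bsub>B\<^esub>)
          \<longrightarrow> (\<forall>x\<in>carrier M. g x = \<zero>\<^bsub>A\<^esub>))
   \<and> (\<forall>h. lhom R M A h \<longrightarrow> (\<forall>x\<in>carrier M. \<beta> (\<alpha> (h x)) = \<zero>\<^bsub>C\<^esub>))
   \<and> (\<forall>g. lhom R M B g \<and> (\<forall>x\<in>carrier M. \<beta> (g x) = \<zero>\<^bsub>C\<^esub>)
          \<longrightarrow> (\<exists>h. lhom R M A h \<and> (\<forall>x\<in>carrier M. \<alpha> (h x) = g x)))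
   \<and> (\<forall>g. lhom R M C g \<longrightarrow> (\<exists>h. lhom R M B h \<and> (\<forall>x\<in>carrier M. \<beta> (h x) = g x)))"

definition lincomb :: "('r, 'a) module \<Rightarrow> 'r list \<Rightarrow> 'a list \<Rightarrow> 'a" where
  "lincomb M rs xs = foldr (\<lambda>(r, x) acc. r \<odot>\<^bsub>M\<^esub> x \<oplus>\<^bsub>M\<^esub> acc) (zip rs xs) \<zero>\<^bsub>M\<^esub>"

definition fin_gen :: "'r ring \<Rightarrow> ('r, 'a) module \<Rightarrow> bool" where
  "fin_gen R M \<longleftrightarrow> lmodule R M \<and> (\<exists>xs. set xs \<subseteq> carrier M \<and>
     (\<forall>m\<in>carrier M. \<exists>rs. set rs \<subseteq> carrier R \<and> length rs = length xs \<and> m = lincomb M rs xs))"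

text \<open>Projectivity: lifting property along all surjective homomorphisms between modules
  whose carriers live in the same type as P.\<close>

definition projective_mod :: "'r ring \<Rightarrow> ('r, 'p) module \<Rightarrow> bool" where
  "projective_mod R P \<longleftrightarrow> lmodule R P \<and>
     (\<forall>(A :: ('r, 'p) module) (B :: ('r, 'p) module) g h.
        lmodule R A \<and> lmodule R B \<and> lhom R A B g \<and> g ` carrier A = carrier B \<and> lhom R P B h
        \<longrightarrow> (\<exists>l. lhom R P A l \<and> (\<forall>x\<in>carrier P. g (l x) = h x)))"

text \<open>Fixed carrier type for the test modules (finitely presented modules R^k/K and
  finitely generated projectives all have an isomorphic copy on this type).\<close>

type_synonym 'r tmod = "(nat \<Rightarrow> 'r) set"

text \<open>The class P^{<k} (k a positive integer or infinity): M admits an exact sequence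
  0 -> P_j -> ... -> P_0 -> M -> 0 with j < k (i.e. j <= k-1) and all P_i finitely
  generated projective; P_i is the zero module for i > j.\<close>

definition fp_class :: "'r ring \<Rightarrow> enat \<Rightarrow> ('r, 'm) module \<Rightarrow> bool" where
  "fp_class R k M \<longleftrightarrow> lmodule R M \<and>
     (\<exists>(j :: nat) (P :: nat \<Rightarrow> ('r, 'r tmod) module) dd eps.
        enat j < k
      \<and> (\<forall>i. fin_gen R (P i) \<and> projective_mod R (P i))
      \<and> (\<forall>i>j. carrier (P i) = {\<zero>\<^bsub>P i\<^esub>})
      \<and> (\<forall>i. lhom R (P (Suc i)) (P i) (dd i))
      \<and> lhom R (P 0) M eps
      \<and> eps ` carrier (P 0) = carrier M
      \<and> {x \<in> carrier (P 0). eps x = \<zero>\<^bsub>M\<^esub>} = dd 0 ` carrier (P 1)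
      \<and> (\<forall>i. {x \<in> carrier (P (Suc i)). dd i x = \<zero>\<^bsub>P i\<^esub>} = dd (Suc i) ` carrier (P (Suc (Suc i)))))"

text \<open>n-exact short exact sequences (n in N or infinity; note \<infinity> + 1 = \<infinity> in enat).\<close>

definition n_exact_seq :: "'r ring \<Rightarrow> enat \<Rightarrow> ('r, 'a) module \<Rightarrow> ('r, 'b) module
    \<Rightarrow> ('r, 'c) module \<Rightarrow> ('a \<Rightarrow> 'b) \<Rightarrow> ('b \<Rightarrow> 'c) \<Rightarrow> bool" where
  "n_exact_seq R n A B C \<alpha> \<beta> \<longleftrightarrow> short_exact R A B C \<alpha> \<beta> \<and>
     (\<forall>M :: ('r, 'r tmod) module. fp_class R (n + 1) M \<longrightarrow> hom_exact R M A B C \<alpha> \<beta>)"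

text \<open>n-projective modules; the n-exact sequences tested have carriers in the type 'u.\<close>

definition n_projective :: "'r ring \<Rightarrow> enat \<Rightarrow> 'u itself \<Rightarrow> ('r, 'p) module \<Rightarrow> bool" where
  "n_projective R n U P \<longleftrightarrow> lmodule R P \<and>
     (\<forall>(A :: ('r, 'u) module) (B :: ('r, 'u) module) (C :: ('r, 'u) module) \<alpha> \<beta>.
        n_exact_seq R n A B C \<alpha> \<beta> \<longrightarrow> hom_exact R P A B C \<alpha> \<beta>)"

definition cochain_complex :: "'r ring \<Rightarrow> (int \<Rightarrow> ('r, 'a) module) \<Rightarrow> (int \<Rightarrow> 'a \<Rightarrow> 'a) \<Rightarrow> bool" where
  "cochain_complex R X d \<longleftrightarrow> (\<forall>i. lmodule R (X i) \<and> lhom R (X i) (X (i + 1)) (d i)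
     \<and> (\<forall>x\<in>carrier (X i). d (i + 1) (d i x) = \<zero>\<^bsub>X (i + 2)\<^esub>))"

definition bounded_above :: "(int \<Rightarrow> ('r, 'a) module) \<Rightarrow> bool" where
  "bounded_above X \<longleftrightarrow> (\<exists>N. \<forall>i>N. carrier (X i) = {\<zero>\<^bsub>X i\<^esub>})"

definition chain_map :: "'r ring \<Rightarrow> (int \<Rightarrow> ('r, 'a) module) \<Rightarrow> (int \<Rightarrow> 'a \<Rightarrow> 'a)
    \<Rightarrow> (int \<Rightarrow> ('r, 'b) module) \<Rightarrow> (int \<Rightarrow> 'b \<Rightarrow> 'b) \<Rightarrow> (int \<Rightarrow> 'a \<Rightarrow> 'b) \<Rightarrow> bool" where
  "chain_map R X dX Y dY f \<longleftrightarrow> (\<forall>i. lhom R (X i) (Y i) (f i)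
     \<and> (\<forall>x\<in>carrier (X i). f (i + 1) (dX i x) = dY i (f i x)))"

text \<open>n-exact complexes: Hom(P, Z) exact for all P in P^{<n+1}.\<close>

definition n_exact_complex :: "'r ring \<Rightarrow> enat \<Rightarrow> (int \<Rightarrow> ('r, 'a) module) \<Rightarrow> (int \<Rightarrow> 'a \<Rightarrow> 'a) \<Rightarrow> bool" where
  "n_exact_complex R n Z d \<longleftrightarrow>
     (\<forall>M :: ('r, 'r tmod) module. fp_class R (n + 1) M \<longrightarrow>
        (\<forall>i g. lhom R M (Z i) g \<and> (\<forall>x\<in>carrier M. d i (g x) = \<zero>\<^bsub>Z (i + 1)\<^esub>)
           \<longrightarrow> (\<exists>h. lhom R M (Z (i - 1)) h \<and> (\<forall>x\<in>carrier M. d (i - 1) (h x) = g x))))"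

definition dsum :: "('r, 'a) module \<Rightarrow> ('r, 'b) module \<Rightarrow> ('r, 'a \<times> 'b) module" where
  "dsum A B = \<lparr>carrier = carrier A \<times> carrier B,
     mult = (\<lambda>_ _. undefined), one = undefined,
     zero = (\<zero>\<^bsub>A\<^esub>, \<zero>\<^bsub>B\<^esub>),
     add = (\<lambda>(a, b) (a', b'). (a \<oplus>\<^bsub>A\<^esub> a', b \<oplus>\<^bsub>B\<^esub> b')),
     smult = (\<lambda>r (a, b). (r \<odot>\<^bsub>A\<^esub> a, r \<odot>\<^bsub>B\<^esub> b))\<rparr>"

definition cone_mod :: "(int \<Rightarrow> ('r, 'a) module) \<Rightarrow> (int \<Rightarrow> ('r, 'b) module) \<Rightarrow> int \<Rightarrow> ('r, 'a \<times> 'b) module" where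
  "cone_mod X Y i = dsum (X (i + 1)) (Y i)"

definition cone_d :: "(int \<Rightarrow> ('r, 'a) module) \<Rightarrow> (int \<Rightarrow> 'a \<Rightarrow> 'a) \<Rightarrow> (int \<Rightarrow> ('r, 'b) module)
    \<Rightarrow> (int \<Rightarrow> 'b \<Rightarrow> 'b) \<Rightarrow> (int \<Rightarrow> 'a \<Rightarrow> 'b) \<Rightarrow> int \<Rightarrow> 'a \<times> 'b \<Rightarrow> 'a \<times> 'b" where
  "cone_d X dX Y dY f i = (\<lambda>(x, y). (\<ominus>\<^bsub>X (i + 2)\<^esub> (dX (i + 1) x), f (i + 1) x \<oplus>\<^bsub>Y (i + 1)\<^esub> dY i y))"

definition n_quasi_iso :: "'r ring \<Rightarrow> enat \<Rightarrow> (int \<Rightarrow> ('r, 'a) module) \<Rightarrow> (int \<Rightarrow> 'a \<Rightarrow> 'a)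
    \<Rightarrow> (int \<Rightarrow> ('r, 'b) module) \<Rightarrow> (int \<Rightarrow> 'b \<Rightarrow> 'b) \<Rightarrow> (int \<Rightarrow> 'a \<Rightarrow> 'b) \<Rightarrow> bool" where
  "n_quasi_iso R n X dX Y dY f \<longleftrightarrow> chain_map R X dX Y dY f
     \<and> n_exact_complex R n (cone_mod X Y) (cone_d X dX Y dY f)"

definition homotopic :: "'r ring \<Rightarrow> (int \<Rightarrow> ('r, 'a) module) \<Rightarrow> (int \<Rightarrow> 'a \<Rightarrow> 'a)
    \<Rightarrow> (int \<Rightarrow> ('r, 'b) module) \<Rightarrow> (int \<Rightarrow> 'b \<Rightarrow> 'b) \<Rightarrow> (int \<Rightarrow> 'a \<Rightarrow> 'b) \<Rightarrow> (int \<Rightarrow> 'a \<Rightarrow> 'b) \<Rightarrow> bool" where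
  "homotopic R X dX Y dY f g \<longleftrightarrow> (\<exists>s. (\<forall>i. lhom R (X i) (Y (i - 1)) (s i))
     \<and> (\<forall>i. \<forall>x\<in>carrier (X i).
          f i x = g i x \<oplus>\<^bsub>Y i\<^esub> dY (i - 1) (s i x) \<oplus>\<^bsub>Y i\<^esub> s (i + 1) (dX i x)))"

definition homotopy_equivalence :: "'r ring \<Rightarrow> (int \<Rightarrow> ('r, 'a) module) \<Rightarrow> (int \<Rightarrow> 'a \<Rightarrow> 'a)
    \<Rightarrow> (int \<Rightarrow> ('r, 'b) module) \<Rightarrow> (int \<Rightarrow> 'b \<Rightarrow> 'b) \<Rightarrow> (int \<Rightarrow> 'a \<Rightarrow> 'b) \<Rightarrow> bool" where
  "homotopy_equivalence R X dX Y dY f \<longleftrightarrow> chain_map R X dX Y dY f \<and>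
     (\<exists>g. chain_map R Y dY X dX g
        \<and> homotopic R X dX X dX (\<lambda>i. g i \<circ> f i) (\<lambda>i. id)
        \<and> homotopic R Y dY Y dY (\<lambda>i. f i \<circ> g i) (\<lambda>i. id))"

end

theory Submission
  imports Defs
begin

lemma lmoduleD:
  assumes "lmodule R M"
  shows "ring R" "abelian_group M"
    "\<And>a x. a \<in> carrier R \<Longrightarrow> x \<in> carrier M \<Longrightarrow> a \<odot>\<^bsub>M\<^esub> x \<in> carrier M"
    "\<And>a b x. a \<in> carrier R \<Longrightarrow> b \<in> carrier R \<Longrightarrow> x \<in> carrier M \<Longrightarrow>
      (a \<oplus>\<^bsub>R\<^esub> b) \<odot>\<^bsub>M\<^esub> x = a \<odot>\<^bsub>M\<^esub> x \<oplus>\<^bsub>M\<^esub> b \<odot>\<^bsub>M\<^esub> x"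
    "\<And>a x y. a \<in> carrier R \<Longrightarrow> x \<in> carrier M \<Longrightarrow> y \<in> carrier M \<Longrightarrow>
      a \<odot>\<^bsub>M\<^esub> (x \<oplus>\<^bsub>M\<^esub> y) = a \<odot>\<^bsub>M\<^esub> x \<oplus>\<^bsub>M\<^esub> a \<odot>\<^bsub>M\<^esub> y"
    "\<And>a b x. a \<in> carrier R \<Longrightarrow> b \<in> carrier R \<Longrightarrow> x \<in> carrier M \<Longrightarrow>
      (a \<otimes>\<^bsub>R\<^esub> b) \<odot>\<^bsub>M\<^esub> x = a \<odot>\<^bsub>M\<^esub> (b \<odot>\<^bsub>M\<^esub> x)"
    "\<And>x. x \<in> carrier M \<Longrightarrow> \<one>\<^bsub>R\<^esub> \<odot>\<^bsub>M\<^esub> x = x"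
  using assms unfolding lmodule_def module_axioms_def by auto

lemma lmodule_smult_zero:
  assumes "lmodule R M" "a \<in> carrier R"
  shows "a \<odot>\<^bsub>M\<^esub> \<zero>\<^bsub>M\<^esub> = \<zero>\<^bsub>M\<^esub>"
proof -
  interpret M: abelian_group M by (rule lmoduleD(2)[OF assms(1)])
  have c: "a \<odot>\<^bsub>M\<^esub> \<zero>\<^bsub>M\<^esub> \<in> carrier M" using lmoduleD(3)[OF assms(1) assms(2)] by simp
  have "a \<odot>\<^bsub>M\<^esub> \<zero>\<^bsub>M\<^esub> \<oplus>\<^bsub>M\<^esub> a \<odot>\<^bsub>M\<^esub> \<zero>\<^bsub>M\<^esub> = a \<odot>\<^bsub>M\<^esub> \<zero>\<^bsub>M\<^esub> \<oplus>\<^bsub>M\<^esub> \<zero>\<^bsub>M\<^esub>"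
    using lmoduleD(5)[OF assms(1) assms(2), of "\<zero>\<^bsub>M\<^esub>" "\<zero>\<^bsub>M\<^esub>"] c by simp
  then show ?thesis using c by simp
qed

lemma lmodule_smult_neg:
  assumes "lmodule R M" "a \<in> carrier R" "x \<in> carrier M"
  shows "a \<odot>\<^bsub>M\<^esub> (\<ominus>\<^bsub>M\<^esub> x) = \<ominus>\<^bsub>M\<^esub> (a \<odot>\<^bsub>M\<^esub> x)"
proof -
  interpret M: abelian_group M by (rule lmoduleD(2)[OF assms(1)])
  have "a \<odot>\<^bsub>M\<^esub> (\<ominus>\<^bsub>M\<^esub> x) \<oplus>\<^bsub>M\<^esub> a \<odot>\<^bsub>M\<^esub> x = \<zero>\<^bsub>M\<^esub>"
    using lmoduleD(5)[OF assms(1) assms(2), of "\<ominus>\<^bsub>M\<^esub> x" x, symmetric] assms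
    by (simp add: M.l_neg lmodule_smult_zero)
  then show ?thesis using assms lmoduleD(3)[OF assms(1)]
    by (metis M.a_inv_closed M.minus_equality)
qed

lemma lhomD:
  assumes "lhom R M N h"
  shows "\<And>x. x \<in> carrier M \<Longrightarrow> h x \<in> carrier N"
    "\<And>x y. x \<in> carrier M \<Longrightarrow> y \<in> carrier M \<Longrightarrow> h (x \<oplus>\<^bsub>M\<^esub> y) = h x \<oplus>\<^bsub>N\<^esub> h y"
    "\<And>r x. r \<in> carrier R \<Longrightarrow> x \<in> carrier M \<Longrightarrow> h (r \<odot>\<^bsub>M\<^esub> x) = r \<odot>\<^bsub>N\<^esub> h x"
  using assms unfolding lhom_def by auto

lemma lhom_zero:
  assumes "lhom R M N h" "abelian_group M" "abelian_group N"
  shows "h \<zero>\<^bsub>M\<^esub> = \<zero>\<^bsub>N\<^esub>"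
proof -
  interpret M: abelian_group M by fact
  interpret N: abelian_group N by fact
  have c: "h \<zero>\<^bsub>M\<^esub> \<in> carrier N" using lhomD(1)[OF assms(1)] by simp
  have "h \<zero>\<^bsub>M\<^esub> \<oplus>\<^bsub>N\<^esub> h \<zero>\<^bsub>M\<^esub> = h \<zero>\<^bsub>M\<^esub> \<oplus>\<^bsub>N\<^esub> \<zero>\<^bsub>N\<^esub>"
    using lhomD(2)[OF assms(1), of "\<zero>\<^bsub>M\<^esub>" "\<zero>\<^bsub>M\<^esub>"] c by simp
  then show ?thesis using c by simp
qed

lemma lhom_neg:
  assumes "lhom R M N h" "abelian_group M" "abelian_group N" "x \<in> carrier M"
  shows "h (\<ominus>\<^bsub>M\<^esub> x) = \<ominus>\<^bsub>N\<^esub> h x"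
proof -
  interpret M: abelian_group M by fact
  interpret N: abelian_group N by fact
  have "h (\<ominus>\<^bsub>M\<^esub> x) \<oplus>\<^bsub>N\<^esub> h x = \<zero>\<^bsub>N\<^esub>"
    using lhomD(2)[OF assms(1), of "\<ominus>\<^bsub>M\<^esub> x" x, symmetric] assms
    by (simp add: M.l_neg lhom_zero)
  then show ?thesis using assms lhomD(1)[OF assms(1)]
    by (metis M.a_inv_closed N.minus_equality)
qed

lemma lhom_minus:
  assumes "lhom R M N h" "abelian_group M" "abelian_group N" "x \<in> carrier M" "y \<in> carrier M"
  shows "h (x \<ominus>\<^bsub>M\<^esub> y) = h x \<ominus>\<^bsub>N\<^esub> h y"
proof -
  interpret M: abelian_group M by fact
  interpret N: abelian_group N by fact
  show ?thesis using assms lhomD(2)[OF assms(1)] lhom_neg[OF assms(1-3)]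
    by (simp add: M.minus_eq N.minus_eq)
qed

lemma lhom_comp:
  assumes "lhom R M N h" "lhom R N P k"
  shows "lhom R M P (\<lambda>x. k (h x))"
  using assms unfolding lhom_def by (auto simp: Pi_def)

lemma lhom_restrict_dom:
  assumes "lhom R M N h" "H \<subseteq> carrier M"
  shows "lhom R (M\<lparr>carrier := H\<rparr>) N h"
  using assms unfolding lhom_def by (auto simp: Pi_def subset_iff)

lemma lhom_into_sub:
  assumes "lhom R M N h" "\<And>x. x \<in> carrier M \<Longrightarrow> h x \<in> H"
  shows "lhom R M (N\<lparr>carrier := H\<rparr>) h"
  using assms unfolding lhom_def by (auto simp: Pi_def)

lemma lhom_from_sub:
  assumes "lhom R M (N\<lparr>carrier := H\<rparr>) h" "H \<subseteq> carrier N"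
  shows "lhom R M N h"
  using assms unfolding lhom_def by (auto simp: Pi_def)

lemma lhom_zero_map:
  assumes "lmodule R N"
  shows "lhom R M N (\<lambda>_. \<zero>\<^bsub>N\<^esub>)"
proof -
  interpret N: abelian_group N by (rule lmoduleD(2)[OF assms])
  show ?thesis unfolding lhom_def using lmodule_smult_zero[OF assms] by auto
qed

lemma submodule_lmodule:
  assumes "lmodule R M" "H \<subseteq> carrier M" "\<zero>\<^bsub>M\<^esub> \<in> H"
    "\<And>x y. x \<in> H \<Longrightarrow> y \<in> H \<Longrightarrow> x \<oplus>\<^bsub>M\<^esub> y \<in> H"
    "\<And>x. x \<in> H \<Longrightarrow> \<ominus>\<^bsub>M\<^esub> x \<in> H"
    "\<And>a x. a \<in> carrier R \<Longrightarrow> x \<in> H \<Longrightarrow> a \<odot>\<^bsub>M\<^esub> x \<in> H"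
  shows "lmodule R (M\<lparr>carrier := H\<rparr>)"
proof -
  interpret M: abelian_group M by (rule lmoduleD(2)[OF assms(1)])
  have ag: "abelian_group (M\<lparr>carrier := H\<rparr>)"
    apply (rule abelian_groupI)
    using assms(2-5) by (auto intro!: bexI[of _ "\<ominus>\<^bsub>M\<^esub> _"] M.l_neg M.a_assoc M.a_comm)
  show ?thesis unfolding lmodule_def module_axioms_def
    using ag lmoduleD[OF assms(1)] assms(2,6) by (auto simp: subset_iff)
qed

lemma dsum_simps[simp]:
  "carrier (dsum A B) = carrier A \<times> carrier B"
  "\<zero>\<^bsub>dsum A B\<^esub> = (\<zero>\<^bsub>A\<^esub>, \<zero>\<^bsub>B\<^esub>)"
  "(a, b) \<oplus>\<^bsub>dsum A B\<^esub> (a', b') = (a \<oplus>\<^bsub>A\<^esub> a', b \<oplus>\<^bsub>B\<^esub> b')"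
  "r \<odot>\<^bsub>dsum A B\<^esub> (a, b) = (r \<odot>\<^bsub>A\<^esub> a, r \<odot>\<^bsub>B\<^esub> b)"
  unfolding dsum_def by simp_all

lemma dsum_lmodule:
  assumes "lmodule R A" "lmodule R B"
  shows "lmodule R (dsum A B)"
proof -
  interpret A: abelian_group A by (rule lmoduleD(2)[OF assms(1)])
  interpret B: abelian_group B by (rule lmoduleD(2)[OF assms(2)])
  have ag: "abelian_group (dsum A B)"
    by (rule abelian_groupI) (auto simp: A.a_ac B.a_ac)
  show ?thesis unfolding lmodule_def module_axioms_def
    using ag lmoduleD[OF assms(1)] lmoduleD[OF assms(2)] by auto
qed

lemma dsum_neg:
  assumes "abelian_group A" "abelian_group B" "a \<in> carrier A" "b \<in> carrier B"
  shows "\<ominus>\<^bsub>dsum A B\<^esub> (a, b) = (\<ominus>\<^bsub>A\<^esub> a, \<ominus>\<^bsub>B\<^esub> b)"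
proof -
  interpret A: abelian_group A by fact
  interpret B: abelian_group B by fact
  have ag: "abelian_group (dsum A B)"
    by (rule abelian_groupI) (auto simp: A.a_ac B.a_ac)
  interpret D: abelian_group "dsum A B" by (rule ag)
  show ?thesis
    by (rule D.minus_equality) (use assms in \<open>auto simp: A.l_neg B.l_neg\<close>)
qed

lemma lhom_inl:
  assumes "lmodule R A" "lmodule R B"
  shows "lhom R A (dsum A B) (\<lambda>x. (x, \<zero>\<^bsub>B\<^esub>))"
proof -
  interpret B: abelian_group B by (rule lmoduleD(2)[OF assms(2)])
  show ?thesis unfolding lhom_def using lmodule_smult_zero[OF assms(2)] by auto
qed

lemma lhom_inr:
  assumes "lmodule R A" "lmodule R B"
  shows "lhom R B (dsum A B) (\<lambda>y. (\<zero>\<^bsub>A\<^esub>, y))"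
proof -
  interpret A: abelian_group A by (rule lmoduleD(2)[OF assms(1)])
  show ?thesis unfolding lhom_def using lmodule_smult_zero[OF assms(1)] by auto
qed

lemma lhom_fst:
  shows "lhom R (dsum A B) A fst"
  unfolding lhom_def by auto

lemma lhom_snd:
  shows "lhom R (dsum A B) B snd"
  unfolding lhom_def by auto

lemma lhom_negate:
  assumes "lhom R M N h" "lmodule R N"
  shows "lhom R M N (\<lambda>x. \<ominus>\<^bsub>N\<^esub> h x)"
proof -
  interpret N: abelian_group N by (rule lmoduleD(2)[OF assms(2)])
  show ?thesis unfolding lhom_def using lhomD[OF assms(1)]
    by (auto simp: N.minus_add N.a_comm lmodule_smult_neg[OF assms(2)])
qed

definition liftP :: "'r ring \<Rightarrow> enat \<Rightarrow> ('r, 'u) module \<Rightarrow> bool" where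
  "liftP R n P \<longleftrightarrow> (\<forall>(A :: ('r, 'u) module) (B :: ('r, 'u) module) (C :: ('r, 'u) module) \<alpha> \<beta> g.
     n_exact_seq R n A B C \<alpha> \<beta> \<and> lhom R P C g \<longrightarrow> (\<exists>h. lhom R P B h \<and> (\<forall>x\<in>carrier P. \<beta> (h x) = g x)))"

lemma n_projective_lift:
  assumes "n_projective R n TYPE('u) P" "n_exact_seq R n (A :: ('r, 'u) module) (B :: ('r, 'u) module) (C :: ('r, 'u) module) \<alpha> \<beta>" "lhom R P C g"
  shows "\<exists>h. lhom R P B h \<and> (\<forall>x\<in>carrier P. \<beta> (h x) = g x)"
proof -
  have "hom_exact R P A B C \<alpha> \<beta>" using assms(1,2) unfolding n_projective_def by blast
  then show ?thesis using assms(3) unfolding hom_exact_def by blast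
qed

lemma dsum_liftP:
  fixes A :: "('r, 'a) module" and B :: "('r, 'b) module"
  assumes "n_projective R n TYPE('a \<times> 'b) A" "n_projective R n TYPE('a \<times> 'b) B"
  shows "liftP R n (dsum A B)"
  unfolding liftP_def
proof (intro allI impI, elim conjE)
  fix Am Bm Cm :: "('r, 'a \<times> 'b) module" and \<alpha> \<beta> g
  assume ex: "n_exact_seq R n Am Bm Cm \<alpha> \<beta>" and g: "lhom R (dsum A B) Cm g"
  have lA: "lmodule R A" and lB: "lmodule R B" using assms unfolding n_projective_def by auto
  have se: "short_exact R Am Bm Cm \<alpha> \<beta>" using ex unfolding n_exact_seq_def by auto
  have lBm: "lmodule R Bm" and lCm: "lmodule R Cm" and hb: "lhom R Bm Cm \<beta>"
    using se unfolding short_exact_def by auto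
  interpret A: abelian_group A by (rule lmoduleD(2)[OF lA])
  interpret B: abelian_group B by (rule lmoduleD(2)[OF lB])
  interpret Bm: abelian_group Bm by (rule lmoduleD(2)[OF lBm])
  interpret Cm: abelian_group Cm by (rule lmoduleD(2)[OF lCm])
  obtain h1 where h1: "lhom R A Bm h1" "\<forall>x\<in>carrier A. \<beta> (h1 x) = g (x, \<zero>\<^bsub>B\<^esub>)"
    using n_projective_lift[OF assms(1) ex lhom_comp[OF lhom_inl[OF lA lB] g]] by auto
  obtain h2 where h2: "lhom R B Bm h2" "\<forall>y\<in>carrier B. \<beta> (h2 y) = g (\<zero>\<^bsub>A\<^esub>, y)"
    using n_projective_lift[OF assms(2) ex lhom_comp[OF lhom_inr[OF lA lB] g]] by auto
  define h where "h = (\<lambda>p. h1 (fst p) \<oplus>\<^bsub>Bm\<^esub> h2 (snd p))"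
  have "lhom R (dsum A B) Bm h"
    unfolding lhom_def h_def using lhomD[OF h1(1)] lhomD[OF h2(1)] lmoduleD(5)[OF lBm]
    by (auto simp: Bm.a_ac)
  moreover have "\<forall>x\<in>carrier (dsum A B). \<beta> (h x) = g x"
  proof
    fix p assume p: "p \<in> carrier (dsum A B)"
    obtain x y where xy: "p = (x, y)" "x \<in> carrier A" "y \<in> carrier B" using p by auto
    have "\<beta> (h p) = g (x, \<zero>\<^bsub>B\<^esub>) \<oplus>\<^bsub>Cm\<^esub> g (\<zero>\<^bsub>A\<^esub>, y)"
      unfolding h_def using xy h1 h2 lhomD[OF hb] lhomD[OF h1(1)] lhomD[OF h2(1)] by simp
    also have "\<dots> = g ((x, \<zero>\<^bsub>B\<^esub>) \<oplus>\<^bsub>dsum A B\<^esub> (\<zero>\<^bsub>A\<^esub>, y))"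
      using lhomD(2)[OF g, of "(x, \<zero>\<^bsub>B\<^esub>)" "(\<zero>\<^bsub>A\<^esub>, y)"] xy by simp
    also have "\<dots> = g p" using xy by simp
    finally show "\<beta> (h p) = g p" .
  qed
  ultimately show "\<exists>h. lhom R (dsum A B) Bm h \<and> (\<forall>x\<in>carrier (dsum A B). \<beta> (h x) = g x)" by blast
qed

definition emb :: "'r \<Rightarrow> 'r tmod" where "emb r = {\<lambda>_. r}"
definition dec :: "'r tmod \<Rightarrow> 'r" where "dec A = (THE r. A = emb r)"

lemma emb_inj[simp]: "emb a = emb b \<longleftrightarrow> a = b"
  unfolding emb_def by (auto dest: fun_cong)

lemma dec_emb[simp]: "dec (emb r) = r"
  unfolding dec_def by auto

definition RM :: "'r ring \<Rightarrow> ('r, 'r tmod) module" where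
  "RM R = \<lparr>carrier = emb ` carrier R, mult = (\<lambda>_ _. undefined), one = undefined,
     zero = emb \<zero>\<^bsub>R\<^esub>, add = (\<lambda>a b. emb (dec a \<oplus>\<^bsub>R\<^esub> dec b)),
     smult = (\<lambda>r a. emb (r \<otimes>\<^bsub>R\<^esub> dec a))\<rparr>"

lemma RM_simps[simp]:
  "carrier (RM R) = emb ` carrier R"
  "\<zero>\<^bsub>RM R\<^esub> = emb \<zero>\<^bsub>R\<^esub>"
  "a \<oplus>\<^bsub>RM R\<^esub> b = emb (dec a \<oplus>\<^bsub>R\<^esub> dec b)"
  "r \<odot>\<^bsub>RM R\<^esub> a = emb (r \<otimes>\<^bsub>R\<^esub> dec a)"
  unfolding RM_def by simp_all

lemma RM_lmodule:
  assumes "ring R" shows "lmodule R (RM R)"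
proof -
  interpret R: ring R by fact
  have ag: "abelian_group (RM R)"
    apply (rule abelian_groupI)
    by (auto simp: R.a_ac)
  show ?thesis unfolding lmodule_def module_axioms_def
    using ag assms by (auto simp: R.l_distr R.r_distr R.m_assoc)
qed

definition TM :: "'r ring \<Rightarrow> ('r, 'r tmod) module" where
  "TM R = (RM R)\<lparr>carrier := {emb \<zero>\<^bsub>R\<^esub>}\<rparr>"

lemma TM_lmodule:
  assumes "ring R" shows "lmodule R (TM R)"
proof -
  interpret R: ring R by fact
  have ag: "abelian_group (RM R)" using RM_lmodule[OF assms] by (rule lmoduleD)
  interpret M: abelian_group "RM R" by (rule ag)
  have m: "\<ominus>\<^bsub>RM R\<^esub> (emb \<zero>\<^bsub>R\<^esub>) = emb \<zero>\<^bsub>R\<^esub>"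
    by (rule M.minus_equality) auto
  show ?thesis unfolding TM_def
    by (rule submodule_lmodule[OF RM_lmodule[OF assms]]) (auto simp: m)
qed

lemma TM_simps[simp]:
  "carrier (TM R) = {emb \<zero>\<^bsub>R\<^esub>}" "\<zero>\<^bsub>TM R\<^esub> = emb \<zero>\<^bsub>R\<^esub>"
  unfolding TM_def by simp_all

lemma lincomb_simps[simp]:
  "lincomb M [] [] = \<zero>\<^bsub>M\<^esub>"
  "lincomb M [r] [x] = r \<odot>\<^bsub>M\<^esub> x \<oplus>\<^bsub>M\<^esub> \<zero>\<^bsub>M\<^esub>"
  unfolding lincomb_def by simp_all

lemma RM_fin_gen:
  assumes "ring R" shows "fin_gen R (RM R)"
proof -
  interpret R: ring R by fact
  show ?thesis unfolding fin_gen_def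
  proof (intro conjI RM_lmodule[OF assms] exI[of _ "[emb \<one>\<^bsub>R\<^esub>]"] ballI)
    show "set [emb \<one>\<^bsub>R\<^esub>] \<subseteq> carrier (RM R)" by auto
    fix m assume "m \<in> carrier (RM R)"
    then obtain r where r: "r \<in> carrier R" "m = emb r" by auto
    show "\<exists>rs. set rs \<subseteq> carrier R \<and> length rs = length [emb \<one>\<^bsub>R\<^esub>] \<and> m = lincomb (RM R) rs [emb \<one>\<^bsub>R\<^esub>]"
      using r by (intro exI[of _ "[r]"]) auto
  qed
qed

lemma TM_fin_gen:
  assumes "ring R" shows "fin_gen R (TM R)"
  unfolding fin_gen_def using TM_lmodule[OF assms]
  by (auto intro!: exI[of _ "[]"])

lemma RM_projective:
  fixes R :: "'r ring"
  assumes "ring R" shows "projective_mod R (RM R)"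
proof -
  interpret R: ring R by fact
  have "\<exists>l. lhom R (RM R) A l \<and> (\<forall>x\<in>carrier (RM R). g (l x) = h x)"
    if lA: "lmodule R A" and lB: "lmodule R B" and g: "lhom R A B g"
    and sur: "g ` carrier A = carrier B" and h: "lhom R (RM R) B h"
    for A B :: "('r, 'r tmod) module" and g h
  proof -
    have "h (emb \<one>\<^bsub>R\<^esub>) \<in> carrier B" using lhomD(1)[OF h] by simp
    then obtain a where a: "a \<in> carrier A" "g a = h (emb \<one>\<^bsub>R\<^esub>)" using sur by (metis imageE)
    define l where "l = (\<lambda>m. dec m \<odot>\<^bsub>A\<^esub> a)"
    have "lhom R (RM R) A l"
      unfolding lhom_def
    proof (intro conjI ballI funcsetI)
      fix x assume "x \<in> carrier (RM R)"
      then obtain r where r: "r \<in> carrier R" "x = emb r" by auto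
      show "l x \<in> carrier A" unfolding l_def using r a lmoduleD(3)[OF lA] by simp
    next
      fix x y assume "x \<in> carrier (RM R)" "y \<in> carrier (RM R)"
      then obtain r s where r: "r \<in> carrier R" "x = emb r" "s \<in> carrier R" "y = emb s" by auto
      show "l (x \<oplus>\<^bsub>RM R\<^esub> y) = l x \<oplus>\<^bsub>A\<^esub> l y"
        unfolding l_def using r a lmoduleD(4)[OF lA r(1) r(3) a(1)] by simp
    next
      fix t x assume "t \<in> carrier R" "x \<in> carrier (RM R)"
      then obtain r where r: "r \<in> carrier R" "x = emb r" "t \<in> carrier R" by auto
      show "l (t \<odot>\<^bsub>RM R\<^esub> x) = t \<odot>\<^bsub>A\<^esub> l x"
        unfolding l_def using r a lmoduleD(6)[OF lA r(3) r(1) a(1)] by simp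
    qed
    moreover have "\<forall>x\<in>carrier (RM R). g (l x) = h x"
    proof
      fix x assume x: "x \<in> carrier (RM R)"
      then obtain r where r: "r \<in> carrier R" "x = emb r" by auto
      have "g (l x) = r \<odot>\<^bsub>B\<^esub> g a"
        unfolding l_def using r a lhomD(3)[OF g r(1) a(1)] by simp
      also have "\<dots> = h (r \<odot>\<^bsub>RM R\<^esub> emb \<one>\<^bsub>R\<^esub>)" using lhomD(3)[OF h, of r "emb \<one>\<^bsub>R\<^esub>"] r a by simp
      also have "\<dots> = h x" using r by simp
      finally show "g (l x) = h x" .
    qed
    ultimately show ?thesis by blast
  qed
  note X = this
  show ?thesis unfolding projective_mod_def
    apply (intro conjI RM_lmodule[OF assms] allI impI)
    subgoal for A B g h using X[of A B g h] by blast
    done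
qed

lemma TM_projective:
  fixes R :: "'r ring"
  assumes "ring R" shows "projective_mod R (TM R)"
proof -
  have "\<exists>l. lhom R (TM R) A l \<and> (\<forall>x\<in>carrier (TM R). g (l x) = h x)"
    if lA: "lmodule R A" and lB: "lmodule R B" and g: "lhom R A B g"
    and h: "lhom R (TM R) B h"
    for A B :: "('r, 'r tmod) module" and g h
  proof -
    have "g \<zero>\<^bsub>A\<^esub> = \<zero>\<^bsub>B\<^esub>" by (rule lhom_zero[OF g lmoduleD(2)[OF lA] lmoduleD(2)[OF lB]])
    moreover have "h \<zero>\<^bsub>TM R\<^esub> = \<zero>\<^bsub>B\<^esub>"
      by (rule lhom_zero[OF h lmoduleD(2)[OF TM_lmodule[OF assms]] lmoduleD(2)[OF lB]])
    moreover have "lhom R (TM R) A (\<lambda>_. \<zero>\<^bsub>A\<^esub>)" by (rule lhom_zero_map[OF lA])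
    ultimately show ?thesis
      by (intro exI[of _ "\<lambda>_. \<zero>\<^bsub>A\<^esub>"]) simp
  qed
  note X = this
  show ?thesis unfolding projective_mod_def
    apply (intro conjI TM_lmodule[OF assms] allI impI)
    subgoal for A B g h using X[of A B g h] by blast
    done
qed

lemma RM_fp_class:
  fixes R :: "'r ring"
  assumes "ring R" "enat 0 < k" shows "fp_class R k (RM R)"
proof -
  define P where "P = (\<lambda>i::nat. if i = 0 then RM R else TM R)"
  define dd where "dd = (\<lambda>(i::nat) (_::'r tmod). \<zero>\<^bsub>P i\<^esub>)"
  have lP: "lmodule R (P i)" for i unfolding P_def using RM_lmodule[OF assms(1)] TM_lmodule[OF assms(1)] by auto
  have 1: "\<forall>i. fin_gen R (P i) \<and> projective_mod R (P i)"
    unfolding P_def using RM_fin_gen[OF assms(1)] TM_fin_gen[OF assms(1)]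
      RM_projective[OF assms(1)] TM_projective[OF assms(1)] by auto
  have 2: "\<forall>i>0. carrier (P i) = {\<zero>\<^bsub>P i\<^esub>}" unfolding P_def by auto
  have 3: "\<forall>i. lhom R (P (Suc i)) (P i) (dd i)" unfolding dd_def using lhom_zero_map[OF lP] by auto
  have 4: "lhom R (P 0) (RM R) (\<lambda>x. x)" unfolding P_def lhom_def by auto
  have 5: "(\<lambda>x. x) ` carrier (P 0) = carrier (RM R)" unfolding P_def by auto
  have 6: "{x \<in> carrier (P 0). x = \<zero>\<^bsub>RM R\<^esub>} = dd 0 ` carrier (P 1)"
    unfolding P_def dd_def using ring.ring_simprules(2)[OF assms(1)] by auto
  have 7: "\<forall>i. {x \<in> carrier (P (Suc i)). dd i x = \<zero>\<^bsub>P i\<^esub>} = dd (Suc i) ` carrier (P (Suc (Suc i)))"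
    unfolding P_def dd_def by auto
  show ?thesis unfolding fp_class_def
    apply (intro conjI RM_lmodule[OF assms(1)])
    apply (rule exI[of _ 0], rule exI[of _ P], rule exI[of _ dd], rule exI[of _ "\<lambda>x. x"])
    using 1 2 3 4 5 6 7 assms(2) by simp
qed

lemma enat_pos_plus1: "enat 0 < n + 1"
proof (cases n)
  case (enat m) then show ?thesis by (simp add: one_enat_def)
next
  case infinity then show ?thesis by simp
qed

lemma n_exact_exact:
  assumes "ring R" "n_exact_complex R n Z d"
    "\<forall>i. lmodule R (Z i) \<and> lhom R (Z i) (Z (i + 1)) (d i)"
    "z \<in> carrier (Z i)" "d i z = \<zero>\<^bsub>Z (i + 1)\<^esub>"
  shows "\<exists>w\<in>carrier (Z (i - 1)). d (i - 1) w = z"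
proof -
  interpret R: ring R by fact
  have lZ: "lmodule R (Z i)" and lZ1: "lmodule R (Z (i + 1))" and hd: "lhom R (Z i) (Z (i + 1)) (d i)"
    using assms(3) by auto
  define g where "g = (\<lambda>m. dec m \<odot>\<^bsub>Z i\<^esub> z)"
  have g: "lhom R (RM R) (Z i) g"
    unfolding lhom_def
  proof (intro conjI ballI funcsetI)
    fix x assume "x \<in> carrier (RM R)"
    then obtain r where r: "r \<in> carrier R" "x = emb r" by auto
    show "g x \<in> carrier (Z i)" unfolding g_def using r assms(4) lmoduleD(3)[OF lZ] by simp
  next
    fix x y assume "x \<in> carrier (RM R)" "y \<in> carrier (RM R)"
    then obtain r s where r: "r \<in> carrier R" "x = emb r" "s \<in> carrier R" "y = emb s" by auto
    show "g (x \<oplus>\<^bsub>RM R\<^esub> y) = g x \<oplus>\<^bsub>Z i\<^esub> g y"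
      unfolding g_def using r lmoduleD(4)[OF lZ r(1) r(3) assms(4)] by simp
  next
    fix t x assume "t \<in> carrier R" "x \<in> carrier (RM R)"
    then obtain r where r: "r \<in> carrier R" "x = emb r" "t \<in> carrier R" by auto
    show "g (t \<odot>\<^bsub>RM R\<^esub> x) = t \<odot>\<^bsub>Z i\<^esub> g x"
      unfolding g_def using r lmoduleD(6)[OF lZ r(3) r(1) assms(4)] by simp
  qed
  have g0: "\<forall>x\<in>carrier (RM R). d i (g x) = \<zero>\<^bsub>Z (i + 1)\<^esub>"
  proof
    fix x assume "x \<in> carrier (RM R)"
    then obtain r where r: "r \<in> carrier R" "x = emb r" by auto
    show "d i (g x) = \<zero>\<^bsub>Z (i + 1)\<^esub>"
      unfolding g_def using r lhomD(3)[OF hd r(1) assms(4)] assms(5) lmodule_smult_zero[OF lZ1 r(1)] by simp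
  qed
  have fp: "fp_class R (n + 1) (RM R)" by (rule RM_fp_class[OF assms(1) enat_pos_plus1])
  have "\<forall>i g. lhom R (RM R) (Z i) g \<and> (\<forall>x\<in>carrier (RM R). d i (g x) = \<zero>\<^bsub>Z (i + 1)\<^esub>)
           \<longrightarrow> (\<exists>h. lhom R (RM R) (Z (i - 1)) h \<and> (\<forall>x\<in>carrier (RM R). d (i - 1) (h x) = g x))"
    using assms(2) fp unfolding n_exact_complex_def by blast
  then obtain h where h: "lhom R (RM R) (Z (i - 1)) h" "\<forall>x\<in>carrier (RM R). d (i - 1) (h x) = g x"
    using g g0 by blast
  have e1: "emb \<one>\<^bsub>R\<^esub> \<in> carrier (RM R)" by simp
  show ?thesis
    using h(2) e1 lhomD(1)[OF h(1) e1] lmoduleD(7)[OF lZ assms(4)]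
    by (intro bexI[of _ "h (emb \<one>\<^bsub>R\<^esub>)"]) (auto simp: g_def)
qed

lemma contraction:
  fixes R :: "'r ring" and Z :: "int \<Rightarrow> ('r, 'u) module" and d :: "int \<Rightarrow> 'u \<Rightarrow> 'u"
  assumes rR: "ring R" and cc: "cochain_complex R Z d"
    and bnd: "\<forall>i>N. carrier (Z i) = {\<zero>\<^bsub>Z i\<^esub>}"
    and nex: "n_exact_complex R n Z d"
    and lift: "\<forall>i. liftP R n (Z i)"
  shows "\<exists>s. (\<forall>i. lhom R (Z i) (Z (i - 1)) (s i))
     \<and> (\<forall>i. \<forall>z\<in>carrier (Z i). d (i - 1) (s i z) \<oplus>\<^bsub>Z i\<^esub> s (i + 1) (d i z) = z)"
proof -
  have lZ: "lmodule R (Z i)" for i using cc unfolding cochain_complex_def by auto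
  have hd: "lhom R (Z i) (Z (i + 1)) (d i)" for i using cc unfolding cochain_complex_def by auto
  have agZ: "abelian_group (Z i)" for i by (rule lmoduleD(2)[OF lZ])
  have dd0: "d (i + 1) (d i x) = \<zero>\<^bsub>Z (i + 1 + 1)\<^esub>" if "x \<in> carrier (Z i)" for i x
  proof -
    have "i + 1 + 1 = i + 2" by simp
    then show ?thesis using cc that unfolding cochain_complex_def by metis
  qed
  have dz: "d i \<zero>\<^bsub>Z i\<^esub> = \<zero>\<^bsub>Z (i + 1)\<^esub>" for i by (rule lhom_zero[OF hd agZ agZ])
  define K where "K i = (Z i)\<lparr>carrier := {z \<in> carrier (Z i). d i z = \<zero>\<^bsub>Z (i + 1)\<^esub>}\<rparr>" for i
  have cK: "carrier (K i) = {z \<in> carrier (Z i). d i z = \<zero>\<^bsub>Z (i + 1)\<^esub>}" for i unfolding K_def by simp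
  have zK: "\<zero>\<^bsub>K i\<^esub> = \<zero>\<^bsub>Z i\<^esub>" for i unfolding K_def by simp
  have lK: "lmodule R (K i)" for i
  proof -
    interpret Zi: abelian_group "Z i" by (rule agZ)
    interpret Zi1: abelian_group "Z (i + 1)" by (rule agZ)
    show ?thesis unfolding K_def
      apply (rule submodule_lmodule[OF lZ])
      using dz lhomD[OF hd] lhom_neg[OF hd agZ agZ] lmodule_smult_zero[OF lZ] lmoduleD(3)[OF lZ]
      by (auto simp: Zi1.minus_equality)
  qed
  have agK: "abelian_group (K i)" for i by (rule lmoduleD(2)[OF lK])
  have exact: "\<exists>w\<in>carrier (Z i). d i w = z" if "z \<in> carrier (K (i + 1))" for i z
  proof -
    have "z \<in> carrier (Z (i + 1))" "d (i + 1) z = \<zero>\<^bsub>Z (i + 1 + 1)\<^esub>" using that cK by auto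
    from n_exact_exact[OF rR nex _ this] lZ hd show ?thesis by simp
  qed
  have nes: "n_exact_seq R n (K i) (Z i) (K (i + 1)) (\<lambda>x. x) (d i)" for i
  proof -
    have "short_exact R (K i) (Z i) (K (i + 1)) (\<lambda>x. x) (d i)"
      unfolding short_exact_def
    proof (intro conjI lK lZ)
      show "lhom R (K i) (Z i) (\<lambda>x. x)" unfolding lhom_def K_def by auto
      show "lhom R (Z i) (K (i + 1)) (d i)" unfolding K_def
        by (rule lhom_into_sub[OF hd]) (use lhomD(1)[OF hd] dd0 in auto)
      show "inj_on (\<lambda>x. x) (carrier (K i))" by simp
      show "d i ` carrier (Z i) = carrier (K (i + 1))"
        using lhomD(1)[OF hd] dd0 exact cK by (auto simp: image_iff) (metis)
      show "{b \<in> carrier (Z i). d i b = \<zero>\<^bsub>K (i + 1)\<^esub>} = (\<lambda>x. x) ` carrier (K i)"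
        using cK zK by auto
    qed
    moreover have "hom_exact R M (K i) (Z i) (K (i + 1)) (\<lambda>x. x) (d i)"
      if fp: "fp_class R (n + 1) M" for M :: "('r, 'r tmod) module"
      unfolding hom_exact_def
    proof (intro conjI allI impI)
      fix g assume "lhom R M (K i) g \<and> (\<forall>x\<in>carrier M. g x = \<zero>\<^bsub>Z i\<^esub>)"
      then show "\<forall>x\<in>carrier M. g x = \<zero>\<^bsub>K i\<^esub>" using zK by auto
    next
      fix h assume "lhom R M (K i) h"
      then show "\<forall>x\<in>carrier M. d i (h x) = \<zero>\<^bsub>K (i + 1)\<^esub>" using lhomD(1) cK zK by fastforce
    next
      fix g assume g: "lhom R M (Z i) g \<and> (\<forall>x\<in>carrier M. d i (g x) = \<zero>\<^bsub>K (i + 1)\<^esub>)"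
      have "lhom R M (K i) g" unfolding K_def
        by (rule lhom_into_sub) (use g lhomD(1) zK in auto)
      then show "\<exists>h. lhom R M (K i) h \<and> (\<forall>x\<in>carrier M. h x = g x)" by blast
    next
      fix g assume g: "lhom R M (K (i + 1)) g"
      have g': "lhom R M (Z (i + 1)) g" using g unfolding K_def by (rule lhom_from_sub) auto
      have g0: "\<forall>x\<in>carrier M. d (i + 1) (g x) = \<zero>\<^bsub>Z (i + 1 + 1)\<^esub>" using lhomD(1)[OF g] cK by auto
      have "\<forall>j g. lhom R M (Z j) g \<and> (\<forall>x\<in>carrier M. d j (g x) = \<zero>\<^bsub>Z (j + 1)\<^esub>)
           \<longrightarrow> (\<exists>h. lhom R M (Z (j - 1)) h \<and> (\<forall>x\<in>carrier M. d (j - 1) (h x) = g x))"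
        using nex fp unfolding n_exact_complex_def by blast
      from this[rule_format, of "i + 1" g] g' g0
      show "\<exists>h. lhom R M (Z i) h \<and> (\<forall>x\<in>carrier M. d i (h x) = g x)" by simp
    qed
    ultimately show ?thesis unfolding n_exact_seq_def by blast
  qed
  have pi: "lhom R (Z j) (K j) (\<lambda>z. z \<ominus>\<^bsub>Z j\<^esub> \<sigma> (d j z))"
    if sig: "lhom R (K (j + 1)) (Z j) \<sigma>" "\<forall>k\<in>carrier (K (j + 1)). d j (\<sigma> k) = k" for j \<sigma>
  proof -
    interpret Zj: abelian_group "Z j" by (rule agZ)
    interpret Zj1: abelian_group "Z (j + 1)" by (rule agZ)
    have dK: "d j z \<in> carrier (K (j + 1))" if "z \<in> carrier (Z j)" for z
      using cK lhomD(1)[OF hd] dd0 that by auto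
    have hZ: "lhom R (Z j) (Z j) (\<lambda>z. z \<ominus>\<^bsub>Z j\<^esub> \<sigma> (d j z))"
      unfolding lhom_def
    proof (intro conjI ballI funcsetI)
      fix z assume z: "z \<in> carrier (Z j)"
      show "z \<ominus>\<^bsub>Z j\<^esub> \<sigma> (d j z) \<in> carrier (Z j)" using z dK lhomD(1)[OF sig(1)] by auto
    next
      fix x y assume xy: "x \<in> carrier (Z j)" "y \<in> carrier (Z j)"
      have "\<sigma> (d j (x \<oplus>\<^bsub>Z j\<^esub> y)) = \<sigma> (d j x) \<oplus>\<^bsub>Z j\<^esub> \<sigma> (d j y)"
        using xy lhomD(2)[OF hd] lhomD(2)[OF sig(1)] dK unfolding K_def by simp
      moreover have "\<sigma> (d j x) \<in> carrier (Z j)" "\<sigma> (d j y) \<in> carrier (Z j)"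
        using xy dK lhomD(1)[OF sig(1)] by auto
      ultimately show "x \<oplus>\<^bsub>Z j\<^esub> y \<ominus>\<^bsub>Z j\<^esub> \<sigma> (d j (x \<oplus>\<^bsub>Z j\<^esub> y)) =
          (x \<ominus>\<^bsub>Z j\<^esub> \<sigma> (d j x)) \<oplus>\<^bsub>Z j\<^esub> (y \<ominus>\<^bsub>Z j\<^esub> \<sigma> (d j y))"
        using xy by (simp add: Zj.minus_eq Zj.minus_add Zj.a_ac)
    next
      fix r x assume rx: "r \<in> carrier R" "x \<in> carrier (Z j)"
      have "\<sigma> (d j (r \<odot>\<^bsub>Z j\<^esub> x)) = r \<odot>\<^bsub>Z j\<^esub> \<sigma> (d j x)"
        using rx lhomD(3)[OF hd] lhomD(3)[OF sig(1)] dK unfolding K_def by simp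
      moreover have "\<sigma> (d j x) \<in> carrier (Z j)" using rx dK lhomD(1)[OF sig(1)] by auto
      ultimately show "r \<odot>\<^bsub>Z j\<^esub> x \<ominus>\<^bsub>Z j\<^esub> \<sigma> (d j (r \<odot>\<^bsub>Z j\<^esub> x)) =
          r \<odot>\<^bsub>Z j\<^esub> (x \<ominus>\<^bsub>Z j\<^esub> \<sigma> (d j x))"
        using rx lmoduleD(5)[OF lZ] lmodule_smult_neg[OF lZ] by (simp add: Zj.minus_eq)
    qed
    show ?thesis unfolding K_def
    proof (rule lhom_into_sub[OF hZ])
      fix z assume z: "z \<in> carrier (Z j)"
      have s: "\<sigma> (d j z) \<in> carrier (Z j)" using z dK lhomD(1)[OF sig(1)] by auto
      have "d j (z \<ominus>\<^bsub>Z j\<^esub> \<sigma> (d j z)) = d j z \<ominus>\<^bsub>Z (j + 1)\<^esub> d j (\<sigma> (d j z))"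
        by (rule lhom_minus[OF hd agZ agZ z s])
      also have "\<dots> = \<zero>\<^bsub>Z (j + 1)\<^esub>" using sig(2) dK[OF z] lhomD(1)[OF hd z]
        by (simp add: Zj1.r_neg Zj1.minus_eq)
      finally show "z \<ominus>\<^bsub>Z j\<^esub> \<sigma> (d j z) \<in> {z \<in> carrier (Z j). d j z = \<zero>\<^bsub>Z (j + 1)\<^esub>}"
        using hZ[unfolded lhom_def] z by auto
    qed
  qed
  define S where "S i \<longleftrightarrow> (\<exists>\<sigma>. lhom R (K (i + 1)) (Z i) \<sigma> \<and> (\<forall>k\<in>carrier (K (i + 1)). d i (\<sigma> k) = k))" for i
  have base: "S i" if "i \<ge> N" for i
  proof -
    have "carrier (K (i + 1)) \<subseteq> {\<zero>\<^bsub>Z (i + 1)\<^esub>}" using bnd that cK by auto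
    then show ?thesis unfolding S_def
      by (intro exI[of _ "\<lambda>_. \<zero>\<^bsub>Z i\<^esub>"] conjI lhom_zero_map[OF lZ]) (auto simp: dz)
  qed
  have step: "S i" if Si1: "S (i + 1)" for i
  proof -
    obtain \<sigma>' where s': "lhom R (K (i + 1 + 1)) (Z (i + 1)) \<sigma>'" "\<forall>k\<in>carrier (K (i + 1 + 1)). d (i + 1) (\<sigma>' k) = k"
      using Si1 unfolding S_def by blast
    have p: "lhom R (Z (i + 1)) (K (i + 1)) (\<lambda>z. z \<ominus>\<^bsub>Z (i + 1)\<^esub> \<sigma>' (d (i + 1) z))"
      by (rule pi[OF s'])
    obtain \<tau> where t: "lhom R (Z (i + 1)) (Z i) \<tau>" "\<forall>x\<in>carrier (Z (i + 1)). d i (\<tau> x) = x \<ominus>\<^bsub>Z (i + 1)\<^esub> \<sigma>' (d (i + 1) x)"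
      using lift[rule_format, of "i + 1", unfolded liftP_def] nes[of i] p by blast
    interpret Zi1: abelian_group "Z (i + 1)" by (rule agZ)
    have s0: "\<sigma>' \<zero>\<^bsub>Z (i + 1 + 1)\<^esub> = \<zero>\<^bsub>Z (i + 1)\<^esub>"
      using lhom_zero[OF s'(1) agK agZ] zK by simp
    have "lhom R (K (i + 1)) (Z i) \<tau>" unfolding K_def by (rule lhom_restrict_dom[OF t(1)]) auto
    moreover have "\<forall>k\<in>carrier (K (i + 1)). d i (\<tau> k) = k"
      using t(2) cK s0 by (auto simp: Zi1.minus_eq)
    ultimately show ?thesis unfolding S_def by blast
  qed
  have ind: "S (N - int m)" for m
  proof (induction m)
    case 0 then show ?case using base by simp
  next
    case (Suc m)
    have "N - int (Suc m) + 1 = N - int m" by simp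
    then show ?case using step[of "N - int (Suc m)"] Suc by simp
  qed
  have allS: "S i" for i
  proof (cases "i \<ge> N")
    case True then show ?thesis by (rule base)
  next
    case False
    then have "i = N - int (nat (N - i))" by simp
    then show ?thesis using ind by metis
  qed
  define \<sigma> where "\<sigma> i = (SOME \<sigma>. lhom R (K (i + 1)) (Z i) \<sigma> \<and> (\<forall>k\<in>carrier (K (i + 1)). d i (\<sigma> k) = k))" for i
  have sig: "lhom R (K (i + 1)) (Z i) (\<sigma> i) \<and> (\<forall>k\<in>carrier (K (i + 1)). d i (\<sigma> i k) = k)" for i
    using allS[of i] unfolding S_def \<sigma>_def by (rule someI_ex)
  define s where "s i z = \<sigma> (i - 1) (z \<ominus>\<^bsub>Z i\<^esub> \<sigma> i (d i z))" for i z
  have "lhom R (Z i) (Z (i - 1)) (s i)" for i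
  proof -
    have "lhom R (Z i) (K (i - 1 + 1)) (\<lambda>z. z \<ominus>\<^bsub>Z i\<^esub> \<sigma> i (d i z))" using pi[OF conjunct1[OF sig] conjunct2[OF sig]] by simp
    from lhom_comp[OF this conjunct1[OF sig[of "i - 1"]]] show ?thesis unfolding s_def by simp
  qed
  moreover have "\<forall>z\<in>carrier (Z i). d (i - 1) (s i z) \<oplus>\<^bsub>Z i\<^esub> s (i + 1) (d i z) = z" for i
  proof
    fix z assume z: "z \<in> carrier (Z i)"
    interpret Zi: abelian_group "Z i" by (rule agZ)
    interpret Zi1: abelian_group "Z (i + 1)" by (rule agZ)
    have pz: "z \<ominus>\<^bsub>Z i\<^esub> \<sigma> i (d i z) \<in> carrier (K i)"
      using lhomD(1)[OF pi[OF conjunct1[OF sig] conjunct2[OF sig]] z] .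
    have "d (i - 1) (s i z) = z \<ominus>\<^bsub>Z i\<^esub> \<sigma> i (d i z)"
      using conjunct2[OF sig[of "i - 1"]] pz unfolding s_def by simp
    moreover have "s (i + 1) (d i z) = \<sigma> i (d i z)"
    proof -
      have e0: "\<sigma> (i + 1) (d (i + 1) (d i z)) = \<zero>\<^bsub>Z (i + 1)\<^esub>"
        using dd0[OF z] lhom_zero[OF conjunct1[OF sig[of "i + 1"]] agK agZ] zK by simp
      have m0: "\<ominus>\<^bsub>Z (i + 1)\<^esub> \<zero>\<^bsub>Z (i + 1)\<^esub> = \<zero>\<^bsub>Z (i + 1)\<^esub>"
        by (rule Zi1.minus_equality) auto
      have dzc: "d i z \<in> carrier (Z (i + 1))" using lhomD(1)[OF hd z] .
      have "d i z \<ominus>\<^bsub>Z (i + 1)\<^esub> \<sigma> (i + 1) (d (i + 1) (d i z)) = d i z \<oplus>\<^bsub>Z (i + 1)\<^esub> \<zero>\<^bsub>Z (i + 1)\<^esub>"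
        unfolding e0 Zi1.minus_eq m0 ..
      also have "\<dots> = d i z" using dzc by (rule Zi1.r_zero)
      finally have "d i z \<ominus>\<^bsub>Z (i + 1)\<^esub> \<sigma> (i + 1) (d (i + 1) (d i z)) = d i z" .
      then show ?thesis unfolding s_def by simp
    qed
    moreover have "\<sigma> i (d i z) \<in> carrier (Z i)"
      using lhomD(1)[OF conjunct1[OF sig[of i]]] lhomD(1)[OF hd z] dd0[OF z] cK by auto
    ultimately show "d (i - 1) (s i z) \<oplus>\<^bsub>Z i\<^esub> s (i + 1) (d i z) = z"
      using z by (simp add: Zi.minus_eq Zi.a_assoc Zi.l_neg)
  qed
  ultimately show ?thesis by blast
qed

lemma ag1:
  assumes "abelian_group G" "u \<in> carrier G" "v \<in> carrier G" "w \<in> carrier G" "u \<oplus>\<^bsub>G\<^esub> v \<oplus>\<^bsub>G\<^esub> w = y"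
  shows "u = y \<oplus>\<^bsub>G\<^esub> \<ominus>\<^bsub>G\<^esub> v \<oplus>\<^bsub>G\<^esub> \<ominus>\<^bsub>G\<^esub> w"
proof -
  interpret G: abelian_group G by fact
  have "y \<oplus>\<^bsub>G\<^esub> \<ominus>\<^bsub>G\<^esub> v \<oplus>\<^bsub>G\<^esub> \<ominus>\<^bsub>G\<^esub> w = u \<oplus>\<^bsub>G\<^esub> (v \<oplus>\<^bsub>G\<^esub> \<ominus>\<^bsub>G\<^esub> v) \<oplus>\<^bsub>G\<^esub> (w \<oplus>\<^bsub>G\<^esub> \<ominus>\<^bsub>G\<^esub> w)"
    unfolding assms(5)[symmetric] using assms(2-4) by (simp add: G.a_ac)
  then show ?thesis using assms(2-4) by (simp add: G.r_neg)
qed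
lemma ag2:
  assumes "abelian_group G" "p \<in> carrier G" "q \<in> carrier G" "u \<in> carrier G" "\<ominus>\<^bsub>G\<^esub> p \<oplus>\<^bsub>G\<^esub> (\<ominus>\<^bsub>G\<^esub> q \<oplus>\<^bsub>G\<^esub> u) = x"
  shows "u = x \<oplus>\<^bsub>G\<^esub> p \<oplus>\<^bsub>G\<^esub> q"
proof -
  interpret G: abelian_group G by fact
  have "x \<oplus>\<^bsub>G\<^esub> p \<oplus>\<^bsub>G\<^esub> q = u \<oplus>\<^bsub>G\<^esub> (\<ominus>\<^bsub>G\<^esub> p \<oplus>\<^bsub>G\<^esub> p) \<oplus>\<^bsub>G\<^esub> (\<ominus>\<^bsub>G\<^esub> q \<oplus>\<^bsub>G\<^esub> q)"
    unfolding assms(5)[symmetric] using assms(2-4) by (simp add: G.a_ac)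
  then show ?thesis using assms(2-4) by (simp add: G.l_neg)
qed
lemma ag3:
  assumes "abelian_group G" "p \<in> carrier G" "q \<in> carrier G" "\<ominus>\<^bsub>G\<^esub> p \<oplus>\<^bsub>G\<^esub> q = \<zero>\<^bsub>G\<^esub>"
  shows "q = p"
proof -
  interpret G: abelian_group G by fact
  have "q = p \<oplus>\<^bsub>G\<^esub> (\<ominus>\<^bsub>G\<^esub> p \<oplus>\<^bsub>G\<^esub> q)" using assms(2,3) by (rule G.r_neg2[symmetric])
  also have "\<dots> = p" unfolding assms(4) using assms(2) by simp
  finally show ?thesis .
qed

lemma ag_neg_zero:
  assumes "abelian_group G" shows "\<ominus>\<^bsub>G\<^esub> \<zero>\<^bsub>G\<^esub> = \<zero>\<^bsub>G\<^esub>"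
proof -
  interpret G: abelian_group G by fact
  show ?thesis by (rule G.minus_equality) auto
qed

lemma idx: "(i::int) + 1 + 1 = i + 2" "(i::int) - 1 + 2 = i + 1" "(i::int) - 1 - 1 + 2 = i"
  "(i::int) + 1 + 2 = i + 3" "(i::int) + 2 - 1 = i + 1"
  by simp_all

lemma cone_d_pair: "cone_d X dX Y dY f i (x, y) =
   (\<ominus>\<^bsub>X (i + 2)\<^esub> (dX (i + 1) x), f (i + 1) x \<oplus>\<^bsub>Y (i + 1)\<^esub> dY i y)"
  unfolding cone_d_def by simp

lemma dsum_fst_add: "fst (p \<oplus>\<^bsub>dsum A B\<^esub> q) = fst p \<oplus>\<^bsub>A\<^esub> fst q"
  by (cases p, cases q) simp

theorem proposition4p9:
  fixes R :: "'r ring" and n :: enat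
    and X :: "int \<Rightarrow> ('r, 'a) module" and dX :: "int \<Rightarrow> 'a \<Rightarrow> 'a"
    and Y :: "int \<Rightarrow> ('r, 'b) module" and dY :: "int \<Rightarrow> 'b \<Rightarrow> 'b"
    and f :: "int \<Rightarrow> 'a \<Rightarrow> 'b"
  assumes "ring R"
    and "cochain_complex R X dX" and "cochain_complex R Y dY"
    and "bounded_above X" and "bounded_above Y"
    and "\<forall>i. n_projective R n TYPE('a \<times> 'b) (X i)"
    and "\<forall>i. n_projective R n TYPE('a \<times> 'b) (Y i)"
    and "n_quasi_iso R n X dX Y dY f"
  shows "homotopy_equivalence R X dX Y dY f"
proof -
  have cm: "chain_map R X dX Y dY f" and nexC: "n_exact_complex R n (cone_mod X Y) (cone_d X dX Y dY f)"
    using assms(8) unfolding n_quasi_iso_def by auto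
  have lX: "lmodule R (X i)" and hdX: "lhom R (X i) (X (i + 1)) (dX i)" for i
    using assms(2) unfolding cochain_complex_def by auto
  have ddX: "dX (i + 1) (dX i x) = \<zero>\<^bsub>X (i + 2)\<^esub>" if "x \<in> carrier (X i)" for i x
    using assms(2) that unfolding cochain_complex_def by auto
  have lY: "lmodule R (Y i)" and hdY: "lhom R (Y i) (Y (i + 1)) (dY i)" for i
    using assms(3) unfolding cochain_complex_def by auto
  have ddY: "dY (i + 1) (dY i x) = \<zero>\<^bsub>Y (i + 2)\<^esub>" if "x \<in> carrier (Y i)" for i x
    using assms(3) that unfolding cochain_complex_def by auto
  have hf: "lhom R (X i) (Y i) (f i)" for i using cm unfolding chain_map_def by auto
  have fc: "f (i + 1) (dX i x) = dY i (f i x)" if "x \<in> carrier (X i)" for i x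
    using cm that unfolding chain_map_def by auto
  have agX: "abelian_group (X i)" for i by (rule lmoduleD(2)[OF lX])
  have agY: "abelian_group (Y i)" for i by (rule lmoduleD(2)[OF lY])
  have dX0: "dX i \<zero>\<^bsub>X i\<^esub> = \<zero>\<^bsub>X (i + 1)\<^esub>" for i by (rule lhom_zero[OF hdX agX agX])
  have dY0: "dY i \<zero>\<^bsub>Y i\<^esub> = \<zero>\<^bsub>Y (i + 1)\<^esub>" for i by (rule lhom_zero[OF hdY agY agY])
  have f0: "f i \<zero>\<^bsub>X i\<^esub> = \<zero>\<^bsub>Y i\<^esub>" for i by (rule lhom_zero[OF hf agX agY])
  have cX: "dX i x \<in> carrier (X (i + 1))" if "x \<in> carrier (X i)" for i x using lhomD(1)[OF hdX] that .
  have cY: "dY i x \<in> carrier (Y (i + 1))" if "x \<in> carrier (Y i)" for i x using lhomD(1)[OF hdY] that .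
  have cf: "f i x \<in> carrier (Y i)" if "x \<in> carrier (X i)" for i x using lhomD(1)[OF hf] that .
  have lC: "lmodule R (cone_mod X Y i)" for i
    unfolding cone_mod_def by (rule dsum_lmodule[OF lX lY])
  have hD: "lhom R (cone_mod X Y i) (cone_mod X Y (i + 1)) (cone_d X dX Y dY f i)" for i
  proof -
    interpret X2: abelian_group "X (i + 2)" by (rule agX)
    interpret Y1: abelian_group "Y (i + 1)" by (rule agY)
    show ?thesis
      unfolding cone_mod_def lhom_def
    proof (intro conjI ballI funcsetI)
      fix p assume "p \<in> carrier (dsum (X (i + 1)) (Y i))"
      then obtain x y where e: "p = (x, y)" and c: "x \<in> carrier (X (i + 1))" "y \<in> carrier (Y i)" by auto
      have c2: "dX (i + 1) x \<in> carrier (X (i + 2))" using cX[OF c(1)] by (simp add: idx)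
      show "cone_d X dX Y dY f i p \<in> carrier (dsum (X (i + 1 + 1)) (Y (i + 1)))"
        using c c2 cY cf by (simp add: e cone_d_pair idx)
    next
      fix p q assume pq: "p \<in> carrier (dsum (X (i + 1)) (Y i))" "q \<in> carrier (dsum (X (i + 1)) (Y i))"
      then obtain x y x' y' where e: "p = (x, y)" "q = (x', y')" and c: "x \<in> carrier (X (i + 1))"
        "y \<in> carrier (Y i)" "x' \<in> carrier (X (i + 1))" "y' \<in> carrier (Y i)" by auto
      have c2: "dX (i + 1) x \<in> carrier (X (i + 2))" "dX (i + 1) x' \<in> carrier (X (i + 2))"
        using cX[OF c(1)] cX[OF c(3)] by (simp_all add: idx)
      show "cone_d X dX Y dY f i (p \<oplus>\<^bsub>dsum (X (i + 1)) (Y i)\<^esub> q) =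
          cone_d X dX Y dY f i p \<oplus>\<^bsub>dsum (X (i + 1 + 1)) (Y (i + 1))\<^esub> cone_d X dX Y dY f i q"
        using c c2 lhomD(2)[OF hdX] lhomD(2)[OF hdY] lhomD(2)[OF hf] cX cY cf
        by (simp add: e cone_d_pair idx X2.minus_add Y1.a_ac)
    next
      fix r p assume rp: "r \<in> carrier R" "p \<in> carrier (dsum (X (i + 1)) (Y i))"
      then obtain x y where e: "p = (x, y)" and c: "x \<in> carrier (X (i + 1))" "y \<in> carrier (Y i)" by auto
      have c2: "dX (i + 1) x \<in> carrier (X (i + 2))" using cX[OF c(1)] by (simp add: idx)
      have "dX (i + 1) (r \<odot>\<^bsub>X (i + 1)\<^esub> x) = r \<odot>\<^bsub>X (i + 2)\<^esub> dX (i + 1) x"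
        using lhomD(3)[OF hdX rp(1) c(1)] by (simp add: idx)
      then show "cone_d X dX Y dY f i (r \<odot>\<^bsub>dsum (X (i + 1)) (Y i)\<^esub> p) =
          r \<odot>\<^bsub>dsum (X (i + 1 + 1)) (Y (i + 1))\<^esub> cone_d X dX Y dY f i p"
        using rp c c2 lhomD(3)[OF hdY] lhomD(3)[OF hf] cY cf lmodule_smult_neg[OF lX]
          lmoduleD(5)[OF lY]
        by (simp add: e cone_d_pair idx)
    qed
  qed
  have DD: "cone_d X dX Y dY f (i + 1) (cone_d X dX Y dY f i p) = \<zero>\<^bsub>cone_mod X Y (i + 2)\<^esub>"
    if p: "p \<in> carrier (cone_mod X Y i)" for i p
  proof -
    interpret X3: abelian_group "X (i + 3)" by (rule agX)
    interpret Y2: abelian_group "Y (i + 2)" by (rule agY)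
    obtain x y where e: "p = (x, y)" and c: "x \<in> carrier (X (i + 1))" "y \<in> carrier (Y i)"
      using p unfolding cone_mod_def by auto
    have c2: "dX (i + 1) x \<in> carrier (X (i + 2))" using cX[OF c(1)] by (simp add: idx)
    have h3: "i + 2 + 1 = i + 3" by simp
    have dd1: "dX (i + 2) (dX (i + 1) x) = \<zero>\<^bsub>X (i + 3)\<^esub>" using ddX[OF c(1)] by (simp add: idx)
    have fc1: "f (i + 2) (dX (i + 1) x) = dY (i + 1) (f (i + 1) x)" using fc[OF c(1)] by (simp add: idx)
    have n1: "dX (i + 2) (\<ominus>\<^bsub>X (i + 2)\<^esub> dX (i + 1) x) = \<ominus>\<^bsub>X (i + 3)\<^esub> \<zero>\<^bsub>X (i + 3)\<^esub>"
      using lhom_neg[OF hdX agX agX c2] dd1 unfolding h3 by simp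
    have n2: "f (i + 2) (\<ominus>\<^bsub>X (i + 2)\<^esub> dX (i + 1) x) = \<ominus>\<^bsub>Y (i + 2)\<^esub> dY (i + 1) (f (i + 1) x)"
      using lhom_neg[OF hf agX agY c2] fc1 by simp
    have a1: "dY (i + 1) (f (i + 1) x \<oplus>\<^bsub>Y (i + 1)\<^esub> dY i y) = dY (i + 1) (f (i + 1) x) \<oplus>\<^bsub>Y (i + 2)\<^esub> \<zero>\<^bsub>Y (i + 2)\<^esub>"
      using lhomD(2)[OF hdY cf[OF c(1)] cY[OF c(2)]] ddY[OF c(2)] by (simp add: idx)
    have cfy: "dY (i + 1) (f (i + 1) x) \<in> carrier (Y (i + 2))" using cY[OF cf[OF c(1)]] by (simp add: idx)
    show ?thesis
      using n1 n2 a1 cfy unfolding e cone_mod_def h3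
      by (simp add: cone_d_pair idx ag_neg_zero[OF agX] Y2.l_neg)
  qed
  have ccC: "cochain_complex R (cone_mod X Y) (cone_d X dX Y dY f)"
    unfolding cochain_complex_def using lC hD DD by blast
  obtain NX where NX: "\<forall>i>NX. carrier (X i) = {\<zero>\<^bsub>X i\<^esub>}" using assms(4) unfolding bounded_above_def by blast
  obtain NY where NY: "\<forall>i>NY. carrier (Y i) = {\<zero>\<^bsub>Y i\<^esub>}" using assms(5) unfolding bounded_above_def by blast
  have bndC: "\<forall>i>max NX NY. carrier (cone_mod X Y i) = {\<zero>\<^bsub>cone_mod X Y i\<^esub>}"
    using NX NY unfolding cone_mod_def by auto
  have liftC: "\<forall>i. liftP R n (cone_mod X Y i)"
    unfolding cone_mod_def using dsum_liftP assms(6,7) by blast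
  obtain s where sl: "\<forall>i. lhom R (cone_mod X Y i) (cone_mod X Y (i - 1)) (s i)"
    and sid: "\<forall>i. \<forall>z\<in>carrier (cone_mod X Y i).
       cone_d X dX Y dY f (i - 1) (s i z) \<oplus>\<^bsub>cone_mod X Y i\<^esub> s (i + 1) (cone_d X dX Y dY f i z) = z"
    using contraction[OF assms(1) ccC bndC nexC liftC] by blast
  have sl': "lhom R (dsum (X (i + 1)) (Y i)) (dsum (X i) (Y (i - 1))) (s i)" for i
    using sl[rule_format, of i] unfolding cone_mod_def by simp
  have sid': "cone_d X dX Y dY f (i - 1) (s i z) \<oplus>\<^bsub>dsum (X (i + 1)) (Y i)\<^esub> s (i + 1) (cone_d X dX Y dY f i z) = z"
    if "z \<in> carrier (dsum (X (i + 1)) (Y i))" for i z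
  proof -
    have "z \<in> carrier (cone_mod X Y i)" using that unfolding cone_mod_def .
    from sid[rule_format, OF this] show ?thesis unfolding cone_mod_def .
  qed
  define g where "g i y = fst (s i (\<zero>\<^bsub>X (i + 1)\<^esub>, y))" for i y
  define hx where "hx i x = fst (s (i - 1) (x, \<zero>\<^bsub>Y (i - 1)\<^esub>))" for i x
  define hy where "hy i y = \<ominus>\<^bsub>Y (i - 1)\<^esub> snd (s i (\<zero>\<^bsub>X (i + 1)\<^esub>, y))" for i y
  have lg: "lhom R (Y i) (X i) (g i)" for i
    using lhom_comp[OF lhom_comp[OF lhom_inr[OF lX[of "i + 1"] lY[of i]] sl'[of i]] lhom_fst]
    unfolding g_def by simp
  have lhx: "lhom R (X i) (X (i - 1)) (hx i)" for i
  proof -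
    have "lhom R (dsum (X i) (Y (i - 1))) (dsum (X (i - 1)) (Y (i - 1 - 1))) (s (i - 1))"
      using sl'[of "i - 1"] by simp
    from lhom_comp[OF lhom_comp[OF lhom_inl[OF lX[of i] lY[of "i - 1"]] this] lhom_fst]
    show ?thesis unfolding hx_def by simp
  qed
  have lhy: "lhom R (Y i) (Y (i - 1)) (hy i)" for i
    using lhom_negate[OF lhom_comp[OF lhom_comp[OF lhom_inr[OF lX[of "i + 1"] lY[of i]] sl'[of i]] lhom_snd] lY[of "i - 1"]]
    unfolding hy_def by simp
  have Yside: "g (i + 1) (dY i y) = dX i (g i y) \<and>
      f i (g i y) = y \<oplus>\<^bsub>Y i\<^esub> dY (i - 1) (hy i y) \<oplus>\<^bsub>Y i\<^esub> hy (i + 1) (dY i y)"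
    if y: "y \<in> carrier (Y i)" for i y
  proof -
    interpret Xi1: abelian_group "X (i + 1)" by (rule agX)
    interpret X2: abelian_group "X (i + 2)" by (rule agX)
    interpret Yi: abelian_group "Y i" by (rule agY)
    interpret Yi1: abelian_group "Y (i + 1)" by (rule agY)
    define b where "b = snd (s i (\<zero>\<^bsub>X (i + 1)\<^esub>, y))"
    define b' where "b' = snd (s (i + 1) (\<zero>\<^bsub>X (i + 2)\<^esub>, dY i y))"
    have z: "(\<zero>\<^bsub>X (i + 1)\<^esub>, y) \<in> carrier (dsum (X (i + 1)) (Y i))" using y by simp
    have sc: "s i (\<zero>\<^bsub>X (i + 1)\<^esub>, y) \<in> carrier (dsum (X i) (Y (i - 1)))"
      using lhomD(1)[OF sl'[of i] z] .
    have sp: "s i (\<zero>\<^bsub>X (i + 1)\<^esub>, y) = (g i y, b)" unfolding g_def b_def by simp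
    have ga: "g i y \<in> carrier (X i)" and bb: "b \<in> carrier (Y (i - 1))" using sc sp by auto
    have D1: "cone_d X dX Y dY f (i - 1) (g i y, b) =
        (\<ominus>\<^bsub>X (i + 1)\<^esub> dX i (g i y), f i (g i y) \<oplus>\<^bsub>Y i\<^esub> dY (i - 1) b)"
      by (simp add: cone_d_pair idx)
    have D2: "cone_d X dX Y dY f i (\<zero>\<^bsub>X (i + 1)\<^esub>, y) = (\<zero>\<^bsub>X (i + 2)\<^esub>, dY i y)"
      using dX0[of "i + 1"] f0[of "i + 1"] cY[OF y]
      by (simp add: cone_d_pair idx ag_neg_zero[OF agX])
    have z2: "(\<zero>\<^bsub>X (i + 2)\<^esub>, dY i y) \<in> carrier (dsum (X (i + 1 + 1)) (Y (i + 1)))" using cY[OF y] by (simp add: idx)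
    have sc2: "s (i + 1) (\<zero>\<^bsub>X (i + 2)\<^esub>, dY i y) \<in> carrier (dsum (X (i + 1)) (Y i))"
      using lhomD(1)[OF sl'[of "i + 1"] z2] by simp
    have S2: "s (i + 1) (\<zero>\<^bsub>X (i + 2)\<^esub>, dY i y) = (g (i + 1) (dY i y), b')"
      unfolding g_def b'_def by (simp add: idx)
    have gb: "g (i + 1) (dY i y) \<in> carrier (X (i + 1))" and bb': "b' \<in> carrier (Y i)" using sc2 S2 by auto
    have "cone_d X dX Y dY f (i - 1) (s i (\<zero>\<^bsub>X (i + 1)\<^esub>, y)) \<oplus>\<^bsub>dsum (X (i + 1)) (Y i)\<^esub>
        s (i + 1) (cone_d X dX Y dY f i (\<zero>\<^bsub>X (i + 1)\<^esub>, y)) = (\<zero>\<^bsub>X (i + 1)\<^esub>, y)"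
      by (rule sid'[OF z])
    then have E: "\<ominus>\<^bsub>X (i + 1)\<^esub> dX i (g i y) \<oplus>\<^bsub>X (i + 1)\<^esub> g (i + 1) (dY i y) = \<zero>\<^bsub>X (i + 1)\<^esub>"
      "f i (g i y) \<oplus>\<^bsub>Y i\<^esub> dY (i - 1) b \<oplus>\<^bsub>Y i\<^esub> b' = y"
      unfolding sp D1 D2 S2 by simp_all
    have c1: "dX i (g i y) \<in> carrier (X (i + 1))" using cX[OF ga] .
    have c2: "dY (i - 1) b \<in> carrier (Y i)" using cY[OF bb] by simp
    have "g (i + 1) (dY i y) = dX i (g i y)" by (rule ag3[OF agX c1 gb E(1)])
    moreover have "f i (g i y) = y \<oplus>\<^bsub>Y i\<^esub> \<ominus>\<^bsub>Y i\<^esub> dY (i - 1) b \<oplus>\<^bsub>Y i\<^esub> \<ominus>\<^bsub>Y i\<^esub> b'"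
      by (rule ag1[OF agY cf[OF ga] c2 bb' E(2)])
    moreover have "dY (i - 1) (hy i y) = \<ominus>\<^bsub>Y i\<^esub> dY (i - 1) b"
      unfolding hy_def b_def[symmetric] using lhom_neg[OF hdY agY agY bb] by simp
    moreover have "hy (i + 1) (dY i y) = \<ominus>\<^bsub>Y i\<^esub> b'"
      unfolding hy_def b'_def by (simp add: idx)
    ultimately show ?thesis by simp
  qed
  have Xside: "g i (f i x) = x \<oplus>\<^bsub>X i\<^esub> dX (i - 1) (hx i x) \<oplus>\<^bsub>X i\<^esub> hx (i + 1) (dX i x)"
    if x: "x \<in> carrier (X i)" for i x
  proof -
    interpret Xi: abelian_group "X i" by (rule agX)
    interpret Xi1: abelian_group "X (i + 1)" by (rule agX)
    interpret Yi: abelian_group "Y i" by (rule agY)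
    interpret Ym1: abelian_group "Y (i - 1)" by (rule agY)
    define q where "q = snd (s (i - 1) (x, \<zero>\<^bsub>Y (i - 1)\<^esub>))"
    define q1 where "q1 = snd (s i (\<ominus>\<^bsub>X (i + 1)\<^esub> dX i x, \<zero>\<^bsub>Y i\<^esub>))"
    define q2 where "q2 = snd (s i (\<zero>\<^bsub>X (i + 1)\<^esub>, f i x))"
    have z: "(x, \<zero>\<^bsub>Y (i - 1)\<^esub>) \<in> carrier (dsum (X (i - 1 + 1)) (Y (i - 1)))" using x by simp
    have sp: "s (i - 1) (x, \<zero>\<^bsub>Y (i - 1)\<^esub>) = (hx i x, q)" unfolding hx_def q_def by simp
    have hxc: "hx i x \<in> carrier (X (i - 1))" using lhomD(1)[OF lhx x] .
    have D1: "fst (cone_d X dX Y dY f (i - 1 - 1) (hx i x, q)) = \<ominus>\<^bsub>X i\<^esub> dX (i - 1) (hx i x)"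
      by (simp add: cone_d_pair idx)
    have D2: "cone_d X dX Y dY f (i - 1) (x, \<zero>\<^bsub>Y (i - 1)\<^esub>) = (\<ominus>\<^bsub>X (i + 1)\<^esub> dX i x, f i x)"
      using dY0[of "i - 1"] cf[OF x] by (simp add: cone_d_pair idx)
    have cdx: "\<ominus>\<^bsub>X (i + 1)\<^esub> dX i x \<in> carrier (X (i + 1))" using cX[OF x] by simp
    have split: "s i (\<ominus>\<^bsub>X (i + 1)\<^esub> dX i x, f i x) =
        s i (\<ominus>\<^bsub>X (i + 1)\<^esub> dX i x, \<zero>\<^bsub>Y i\<^esub>) \<oplus>\<^bsub>dsum (X i) (Y (i - 1))\<^esub> s i (\<zero>\<^bsub>X (i + 1)\<^esub>, f i x)"
      using lhomD(2)[OF sl'[of i], of "(\<ominus>\<^bsub>X (i + 1)\<^esub> dX i x, \<zero>\<^bsub>Y i\<^esub>)" "(\<zero>\<^bsub>X (i + 1)\<^esub>, f i x)"]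
        cdx cf[OF x] by simp
    have s1: "s i (\<ominus>\<^bsub>X (i + 1)\<^esub> dX i x, \<zero>\<^bsub>Y i\<^esub>) = (\<ominus>\<^bsub>X i\<^esub> hx (i + 1) (dX i x), q1)"
    proof -
      have "hx (i + 1) (\<ominus>\<^bsub>X (i + 1)\<^esub> dX i x) = \<ominus>\<^bsub>X i\<^esub> hx (i + 1) (dX i x)"
        using lhom_neg[OF lhx[of "i + 1"] agX agX cX[OF x]] by simp
      then show ?thesis unfolding q1_def hx_def by (simp add: prod_eq_iff)
    qed
    have s2: "s i (\<zero>\<^bsub>X (i + 1)\<^esub>, f i x) = (g i (f i x), q2)" unfolding g_def q2_def by simp
    have "cone_d X dX Y dY f (i - 1 - 1) (s (i - 1) (x, \<zero>\<^bsub>Y (i - 1)\<^esub>)) \<oplus>\<^bsub>dsum (X (i - 1 + 1)) (Y (i - 1))\<^esub>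
        s (i - 1 + 1) (cone_d X dX Y dY f (i - 1) (x, \<zero>\<^bsub>Y (i - 1)\<^esub>)) = (x, \<zero>\<^bsub>Y (i - 1)\<^esub>)"
      by (rule sid'[OF z])
    then have e1: "cone_d X dX Y dY f (i - 1 - 1) (hx i x, q) \<oplus>\<^bsub>dsum (X i) (Y (i - 1))\<^esub>
        ((\<ominus>\<^bsub>X i\<^esub> hx (i + 1) (dX i x), q1) \<oplus>\<^bsub>dsum (X i) (Y (i - 1))\<^esub> (g i (f i x), q2)) = (x, \<zero>\<^bsub>Y (i - 1)\<^esub>)"
      unfolding sp D2 by (simp only: diff_add_cancel split s1 s2)
    have "fst (cone_d X dX Y dY f (i - 1 - 1) (hx i x, q)) \<oplus>\<^bsub>X i\<^esub>
        (\<ominus>\<^bsub>X i\<^esub> hx (i + 1) (dX i x) \<oplus>\<^bsub>X i\<^esub> g i (f i x)) = x"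
      using arg_cong[OF e1, of fst] by (simp only: dsum_fst_add fst_conv)
    then have E: "\<ominus>\<^bsub>X i\<^esub> dX (i - 1) (hx i x) \<oplus>\<^bsub>X i\<^esub> (\<ominus>\<^bsub>X i\<^esub> hx (i + 1) (dX i x) \<oplus>\<^bsub>X i\<^esub> g i (f i x)) = x"
      unfolding D1 .
    have c1: "dX (i - 1) (hx i x) \<in> carrier (X i)" using cX[OF hxc] by simp
    have c2: "hx (i + 1) (dX i x) \<in> carrier (X i)" using lhomD(1)[OF lhx[of "i + 1"] cX[OF x]] by simp
    have c3: "g i (f i x) \<in> carrier (X i)" using lhomD(1)[OF lg cf[OF x]] .
    show ?thesis by (rule ag2[OF agX c1 c2 c3 E])
  qed
  have "chain_map R Y dY X dX g"
    unfolding chain_map_def using lg Yside by blast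
  moreover have "homotopic R X dX X dX (\<lambda>i. g i \<circ> f i) (\<lambda>i. id)"
    unfolding homotopic_def using lhx Xside by (intro exI[of _ hx]) auto
  moreover have "homotopic R Y dY Y dY (\<lambda>i. f i \<circ> g i) (\<lambda>i. id)"
    unfolding homotopic_def using lhy Yside by (intro exI[of _ hy]) auto
  ultimately show ?thesis unfolding homotopy_equivalence_def using cm by blast
qed

end
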